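(* Let $\sigma(x)=1/(1+e^{-x})$, let $N,d\in\mathbb{N}$ with $N>2$, and let $f_{mult}$ and $c_{56}$ be as in the context. Let $0<A\le1$ and assume $c_{56}\cdot4^{dN}\cdot A^{N-1}\le1$. Then there exists a feedforward neural network $f_{mult,d}:\mathbb{R}^d\to\mathbb{R}$ with activation function $\sigma$, with at most $\lceil\log_2 d\rceil$ hidden layers and at most $2Nd$ neurons in each layer, all of whose weights are bounded in absolute value by a constant not depending on $A$, such that for all $x_1,\dots,x_d\in[-A,A]$ $$\Big|f_{mult,d}(x_1,\dots,x_d)-\prod_{j=1}^dx_j\Big|\le c_{57}A^N,$$ where $c_{57}\ge0$ is a constant not depending on $A$.
   Context: Fix $t_\sigma\in\mathbb{R}$ with $\sigma''(t_\sigma)\ne0$, and $\alpha_j,\beta_j$ ($j=0,\dots,N-1$), $c_{54}\ge0$ such that $f_{net,x^2}(x)=\frac{2}{\sigma''(t_\sigma)}\sum_{j=0}^{N-1}\alpha_j\sigma(\beta_jx+t_\sigma)$ satisfies $|f_{net,x^2}(x)-x^2|\le c_{54}A^N$ for all $A>0$, $x\in[-A,A]$. Let $f_{mult}(x,y)=\frac14(f_{net,x^2}(x+y)-f_{net,x^2}(x-y))$ and let $c_{56}>0$ be a constant (depending only on $c_{54},N$) such that $|f_{mult}(x,y)-xy|\le c_{56}A^N$ for all $A>0$, $x,y\in[-A,A]$. A feedforward network with $\sigma$ activation: each hidden neuron computes $\sigma$ of an affine combination of the outputs of the previous layer (or of the inputs), and the output is an affine combination of the last hidden layer (or of the inputs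 if there are no hidden layers). *)

theory Defs
  imports "HOL-Analysis.Analysis"
begin

definition sigmoid :: "real \<Rightarrow> real" where
  "sigmoid x = 1 / (1 + exp (- x))"

definition f_net_sq :: "real \<Rightarrow> (nat \<Rightarrow> real) \<Rightarrow> (nat \<Rightarrow> real) \<Rightarrow> nat \<Rightarrow> real \<Rightarrow> real" where
  "f_net_sq t \<alpha> \<beta> N x =
     2 / deriv (deriv sigmoid) t * (\<Sum>j<N. \<alpha> j * sigmoid (\<beta> j * x + t))"

definition f_mult :: "real \<Rightarrow> (nat \<Rightarrow> real) \<Rightarrow> (nat \<Rightarrow> real) \<Rightarrow> nat \<Rightarrow> real \<Rightarrow> real \<Rightarrow> real" where
  "f_mult t \<alpha> \<beta> N x y = (f_net_sq t \<alpha> \<beta> N (x + y) - f_net_sq t \<alpha> \<beta> N (x - y)) / 4"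

text \<open>Feedforward networks. A neuron is (weights, bias); a layer is a list of neurons.
  A network is a list of hidden layers together with an affine output neuron.\<close>
type_synonym neuron = "real list \<times> real"
type_synonym layer = "neuron list"
type_synonym ffnet = "layer list \<times> neuron"

definition affine :: "neuron \<Rightarrow> real list \<Rightarrow> real" where
  "affine n x = sum_list (map2 (*) (fst n) x) + snd n"

definition eval_layer :: "(real \<Rightarrow> real) \<Rightarrow> layer \<Rightarrow> real list \<Rightarrow> real list" where
  "eval_layer act L x = map (\<lambda>n. act (affine n x)) L"

fun eval_hidden :: "(real \<Rightarrow> real) \<Rightarrow> layer list \<Rightarrow> real list \<Rightarrow> real list" where
  "eval_hidden act [] x = x"
| "eval_hidden act (L # Ls) x = eval_hidden act Ls (eval_layer act L x)"

definition net_eval :: "(real \<Rightarrow> real) \<Rightarrow> ffnet \<Rightarrow> real list \<Rightarrow> real" where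
  "net_eval act F x = affine (snd F) (eval_hidden act (fst F) x)"

fun layers_wf :: "nat \<Rightarrow> layer list \<Rightarrow> nat \<Rightarrow> bool" where
  "layers_wf n [] m = (n = m)"
| "layers_wf n (L # Ls) m = ((\<forall>nr\<in>set L. length (fst nr) = n) \<and> layers_wf (length L) Ls m)"

definition net_wf :: "nat \<Rightarrow> ffnet \<Rightarrow> bool" where
  "net_wf d F = (\<exists>m. layers_wf d (fst F) m \<and> length (fst (snd F)) = m)"

definition neuron_bounded :: "real \<Rightarrow> neuron \<Rightarrow> bool" where
  "neuron_bounded B nr = ((\<forall>w\<in>set (fst nr). \<bar>w\<bar> \<le> B) \<and> \<bar>snd nr\<bar> \<le> B)"

definition weights_bounded :: "real \<Rightarrow> ffnet \<Rightarrow> bool" where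
  "weights_bounded B F = ((\<forall>L\<in>set (fst F). \<forall>nr\<in>set L. neuron_bounded B nr) \<and> neuron_bounded B (snd F))"

end

theory Submission
  imports Defs "HOL-Computational_Algebra.Polynomial"
begin

definition lag :: "nat \<Rightarrow> nat \<Rightarrow> real poly" where
  "lag n j = smult (1 / (\<Prod>i\<in>{..<n}-{j}. (real j - real i))) (\<Prod>i\<in>{..<n}-{j}. [:- real i, 1:])"

lemma poly_lag:
  assumes "j < n" "k < n"
  shows "poly (lag n j) (real k) = (if k = j then 1 else 0)"
proof (cases "k = j")
  case True
  have "(\<Prod>i\<in>{..<n}-{j}. (real j - real i)) \<noteq> 0"
    by (subst prod_zero_iff) auto
  then show ?thesis using True by (simp add: lag_def poly_prod)
next
  case False
  have "(\<Prod>i\<in>{..<n}-{j}. poly [:- real i, 1:] (real k)) = 0"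
    using False assms by (intro prod_zero) (use False assms in auto)
  then show ?thesis using False by (simp add: lag_def poly_prod)
qed

lemma degree_lag: assumes "j < n" shows "degree (lag n j) < n"
proof -
  have "degree (\<Prod>i\<in>{..<n}-{j}. [:- real i, 1:]) \<le> (\<Sum>i\<in>{..<n}-{j}. degree [:- real i, 1:])"
    using degree_prod_sum_le[of "{..<n}-{j}" "\<lambda>i. [:- real i, 1:]"] by (simp add: o_def)
  also have "\<dots> = card ({..<n}-{j})" by simp
  also have "\<dots> < n" using assms by (simp add: card_Diff_singleton)
  finally show ?thesis unfolding lag_def using degree_smult_le[of "1 / (\<Prod>i\<in>{..<n}-{j}. (real j - real i))" "\<Prod>i\<in>{..<n}-{j}. [:- real i, 1:]"] by linarith
qed

lemma lag_sum:
  assumes "m < n"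
  shows "(\<Sum>j<n. smult (real j ^ m) (lag n j)) = monom 1 m"
proof (rule poly_eqI_degree[where A = "real ` {..<n}"])
  fix x assume "x \<in> real ` {..<n}"
  then obtain k where k: "k < n" "x = real k" by auto
  have "poly (\<Sum>j<n. smult (real j ^ m) (lag n j)) x = (\<Sum>j<n. real j ^ m * (if k = j then 1 else 0))"
    using k by (simp add: poly_sum poly_lag)
  also have "\<dots> = real k ^ m" using k by (simp add: if_distrib sum.delta cong: if_cong)
  finally show "poly (\<Sum>j<n. smult (real j ^ m) (lag n j)) x = poly (monom 1 m) x"
    using k by (simp add: poly_monom)
next
  have c: "card (real ` {..<n}) = n" by (simp add: card_image)
  have "degree (\<Sum>j<n. smult (real j ^ m) (lag n j)) < n"
  proof (cases n)
    case 0 then show ?thesis using assms by simp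
  next
    case (Suc n')
    have "degree (\<Sum>j<n. smult (real j ^ m) (lag n j)) \<le> n'"
    proof (rule degree_sum_le)
      fix j assume "j \<in> {..<n}"
      then have "degree (lag n j) < n" by (simp add: degree_lag)
      then show "degree (smult (real j ^ m) (lag n j)) \<le> n'"
        using degree_smult_le[of "real j ^ m" "lag n j"] Suc by linarith
    qed simp
    then show ?thesis using Suc by simp
  qed
  then show "degree (\<Sum>j<n. smult (real j ^ m) (lag n j)) < card (real ` {..<n})" using c by simp
  show "degree (monom (1::real) m) < card (real ` {..<n})" using c assms by (simp add: degree_monom_eq)
qed

lemma lag_coeff:
  assumes "m < n"
  shows "(\<Sum>j<n. coeff (lag n j) 1 * real j ^ m) = (if m = 1 then 1 else 0)"
proof -
  have "coeff (\<Sum>j<n. smult (real j ^ m) (lag n j)) 1 = coeff (monom 1 m) 1"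
    using lag_sum[OF assms] by simp
  then show ?thesis by (simp add: coeff_sum coeff_monom mult.commute)
qed

lemma sigmoid_pos: "0 < sigmoid x" and sigmoid_lt1: "sigmoid x < 1"
  unfolding sigmoid_def by (auto simp: add_pos_pos)

lemma sigmoid_deriv: "(sigmoid has_real_derivative sigmoid x * (1 - sigmoid x)) (at x)"
proof -
  have pos: "1 + exp (- x) \<noteq> 0" using exp_gt_zero[of "- x"] by linarith
  have d: "((\<lambda>x. 1 + exp (-x)) has_real_derivative - exp (-x)) (at x)"
    by (auto intro!: derivative_eq_intros)
  have "((\<lambda>x. inverse (1 + exp (-x))) has_real_derivative
          - (- exp (-x) * inverse ((1 + exp (-x)) ^ Suc (Suc 0)))) (at x)"
    by (rule DERIV_inverse_fun[OF d pos])
  moreover have "- (- exp (-x) * inverse ((1 + exp (-x)) ^ Suc (Suc 0))) = sigmoid x * (1 - sigmoid x)"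
    unfolding sigmoid_def using pos by (simp add: field_simps)
  moreover have "sigmoid = (\<lambda>x. inverse (1 + exp (-x)))"
    by (rule ext) (simp add: sigmoid_def divide_inverse)
  ultimately show ?thesis by simp
qed

definition Dsig :: "nat \<Rightarrow> real \<Rightarrow> real" where "Dsig n = (deriv ^^ n) sigmoid"

lemma poly_sig_deriv:
  "((\<lambda>x. poly p (sigmoid x)) has_real_derivative poly (pderiv p * [:0,1,-1:]) (sigmoid x)) (at x)"
proof -
  have "((\<lambda>x. poly p (sigmoid x)) has_real_derivative poly (pderiv p) (sigmoid x) * (sigmoid x * (1 - sigmoid x))) (at x)"
    using DERIV_chain2[OF poly_DERIV sigmoid_deriv] .
  moreover have "poly (pderiv p) (sigmoid x) * (sigmoid x * (1 - sigmoid x)) = poly (pderiv p * [:0,1,-1:]) (sigmoid x)"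
    by (simp add: algebra_simps)
  ultimately show ?thesis by simp
qed

lemma Dsig_poly: "\<exists>p. Dsig n = (\<lambda>x. poly p (sigmoid x))"
proof (induction n)
  case 0
  show ?case by (rule exI[of _ "[:0,1:]"]) (simp add: Dsig_def)
next
  case (Suc n)
  then obtain p where p: "Dsig n = (\<lambda>x. poly p (sigmoid x))" by blast
  have "Dsig (Suc n) = deriv (Dsig n)" by (simp add: Dsig_def)
  also have "\<dots> = (\<lambda>x. poly (pderiv p * [:0,1,-1:]) (sigmoid x))"
  proof
    fix x show "deriv (Dsig n) x = poly (pderiv p * [:0,1,-1:]) (sigmoid x)"
      unfolding p by (rule DERIV_imp_deriv[OF poly_sig_deriv])
  qed
  finally show ?case by blast
qed

lemma Dsig_deriv: "(Dsig m has_real_derivative Dsig (Suc m) x) (at x)"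
proof -
  obtain p where p: "Dsig m = (\<lambda>x. poly p (sigmoid x))" using Dsig_poly by blast
  have "Dsig (Suc m) = deriv (Dsig m)" by (simp add: Dsig_def)
  then have "Dsig (Suc m) x = poly (pderiv p * [:0,1,-1:]) (sigmoid x)"
    unfolding p using DERIV_imp_deriv[OF poly_sig_deriv] by simp
  then show ?thesis using p poly_sig_deriv by simp
qed

lemma Dsig_bounded: "\<exists>K. \<forall>x. \<bar>Dsig n x\<bar> \<le> K"
proof -
  obtain p where p: "Dsig n = (\<lambda>x. poly p (sigmoid x))" using Dsig_poly by blast
  have "compact (poly p ` {0..1})"
    by (intro compact_continuous_image continuous_intros) auto
  then have "bounded (poly p ` {0..1})" by (rule compact_imp_bounded)
  then obtain K where K: "\<forall>y \<in> poly p ` {0..1}. norm y \<le> K"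
    unfolding bounded_iff by blast
  show ?thesis
  proof (intro exI allI)
    fix x
    have "sigmoid x \<in> {0..1}" using sigmoid_pos[of x] sigmoid_lt1[of x] by auto
    then have "norm (poly p (sigmoid x)) \<le> K" using K by blast
    then show "\<bar>Dsig n x\<bar> \<le> K" unfolding p by simp
  qed
qed

lemma Dsig_1_0: "Dsig 1 0 = 1/4"
proof -
  have "Dsig 1 = deriv sigmoid" by (simp add: Dsig_def)
  then have "Dsig 1 0 = sigmoid 0 * (1 - sigmoid 0)" using DERIV_imp_deriv[OF sigmoid_deriv] by simp
  then show ?thesis by (simp add: sigmoid_def)
qed

lemma sigmoid_taylor:
  "\<exists>K\<ge>0. \<forall>x. \<bar>sigmoid x - (\<Sum>m<n. Dsig m 0 / fact m * x ^ m)\<bar> \<le> K * \<bar>x\<bar> ^ n"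
proof -
  obtain K where K: "\<And>x. \<bar>Dsig n x\<bar> \<le> K" using Dsig_bounded by blast
  have K0: "K \<ge> 0" using K[of 0] by simp
  show ?thesis
  proof (intro exI[of _ "K / fact n"] conjI allI)
    show "K / fact n \<ge> 0" using K0 by simp
    fix x
    have h0: "Dsig 0 = sigmoid" by (simp add: Dsig_def)
    have h1: "\<forall>m x. DERIV (Dsig m) x :> Dsig (Suc m) x" using Dsig_deriv by blast
    have "\<exists>s. \<bar>s\<bar> \<le> \<bar>x\<bar> \<and> sigmoid x = (\<Sum>m<n. Dsig m 0 / fact m * x ^ m) + Dsig n s / fact n * x ^ n"
      by (rule Maclaurin_all_le[where diff=Dsig and f=sigmoid and x=x and n=n, OF h0 h1])
    then obtain s where
      "sigmoid x = (\<Sum>m<n. Dsig m 0 / fact m * x ^ m) + Dsig n s / fact n * x ^ n" by blast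
    then have "\<bar>sigmoid x - (\<Sum>m<n. Dsig m 0 / fact m * x ^ m)\<bar> = \<bar>Dsig n s\<bar> / fact n * \<bar>x\<bar> ^ n"
      by (simp add: abs_mult power_abs)
    also have "\<dots> \<le> K / fact n * \<bar>x\<bar> ^ n"
      using K[of s] by (intro mult_right_mono divide_right_mono) auto
    finally show "\<bar>sigmoid x - (\<Sum>m<n. Dsig m 0 / fact m * x ^ m)\<bar> \<le> K / fact n * \<bar>x\<bar> ^ n" .
  qed
qed

definition idc :: "nat \<Rightarrow> nat \<Rightarrow> real" where "idc n j = coeff (lag n j) 1"
definition idf :: "nat \<Rightarrow> real \<Rightarrow> real" where
  "idf n u = (\<Sum>j<n. 4 * idc n j * sigmoid (real j * u))"

lemma id_approx:
  assumes "n \<ge> 2"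
  shows "\<exists>K\<ge>0. \<forall>u. \<bar>idf n u - u\<bar> \<le> K * \<bar>u\<bar> ^ n"
proof -
  obtain K0 where K0: "K0 \<ge> 0" "\<And>x. \<bar>sigmoid x - (\<Sum>m<n. Dsig m 0 / fact m * x ^ m)\<bar> \<le> K0 * \<bar>x\<bar> ^ n"
    using sigmoid_taylor by blast
  define T where "T x = (\<Sum>m<n. Dsig m 0 / fact m * x ^ m)" for x
  have sumT: "(\<Sum>j<n. idc n j * T (real j * u)) = u / 4" for u
  proof -
    have "(\<Sum>j<n. idc n j * T (real j * u)) = (\<Sum>j<n. \<Sum>m<n. Dsig m 0 / fact m * u ^ m * (idc n j * real j ^ m))"
      unfolding T_def by (intro sum.cong refl) (simp add: sum_distrib_left power_mult_distrib mult_ac)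
    also have "\<dots> = (\<Sum>m<n. Dsig m 0 / fact m * u ^ m * (\<Sum>j<n. idc n j * real j ^ m))"
      by (subst sum.swap) (simp add: sum_distrib_left)
    also have "\<dots> = (\<Sum>m<n. Dsig m 0 / fact m * u ^ m * (if m = 1 then 1 else 0))"
      using lag_coeff unfolding idc_def by (intro sum.cong) auto
    also have "\<dots> = Dsig 1 0 * u" using assms by (simp add: if_distrib sum.delta cong: if_cong)
    also have "\<dots> = u / 4" unfolding Dsig_1_0 by simp
    finally show ?thesis .
  qed
  define K where "K = 4 * K0 * (\<Sum>j<n. \<bar>idc n j\<bar> * real j ^ n)"
  show ?thesis
  proof (intro exI[of _ K] conjI allI)
    show "K \<ge> 0" unfolding K_def using K0(1) by (intro mult_nonneg_nonneg sum_nonneg) auto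
    fix u
    have e1: "idf n u = 4 * (\<Sum>j<n. idc n j * sigmoid (real j * u))"
      unfolding idf_def by (simp add: sum_distrib_left mult.assoc)
    have e2: "(\<Sum>j<n. idc n j * (sigmoid (real j * u) - T (real j * u)))
       = (\<Sum>j<n. idc n j * sigmoid (real j * u)) - (\<Sum>j<n. idc n j * T (real j * u))"
      by (simp add: right_diff_distrib sum_subtractf)
    have eq: "idf n u - u = 4 * (\<Sum>j<n. idc n j * (sigmoid (real j * u) - T (real j * u)))"
      unfolding e1 e2 sumT by simp
    have "\<bar>\<Sum>j<n. idc n j * (sigmoid (real j * u) - T (real j * u))\<bar>
          \<le> (\<Sum>j<n. \<bar>idc n j * (sigmoid (real j * u) - T (real j * u))\<bar>)" by (rule sum_abs)
    also have "\<dots> \<le> (\<Sum>j<n. \<bar>idc n j\<bar> * (K0 * \<bar>real j * u\<bar> ^ n))"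
    proof (rule sum_mono)
      fix j assume "j \<in> {..<n}"
      have "\<bar>sigmoid (real j * u) - T (real j * u)\<bar> \<le> K0 * \<bar>real j * u\<bar> ^ n"
        unfolding T_def by (rule K0(2))
      then show "\<bar>idc n j * (sigmoid (real j * u) - T (real j * u))\<bar> \<le> \<bar>idc n j\<bar> * (K0 * \<bar>real j * u\<bar> ^ n)"
        unfolding abs_mult by (rule mult_left_mono) simp
    qed
    also have "\<dots> = (\<Sum>j<n. \<bar>idc n j\<bar> * real j ^ n) * K0 * \<bar>u\<bar> ^ n"
      by (simp add: sum_distrib_left sum_distrib_right abs_mult power_mult_distrib mult_ac)
    finally have "\<bar>idf n u - u\<bar> \<le> 4 * ((\<Sum>j<n. \<bar>idc n j\<bar> * real j ^ n) * K0 * \<bar>u\<bar> ^ n)"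
      unfolding eq by simp
    then show "\<bar>idf n u - u\<bar> \<le> K * \<bar>u\<bar> ^ n" unfolding K_def by (simp add: mult_ac)
  qed
qed

definition comb :: "real \<Rightarrow> real \<Rightarrow> real \<Rightarrow> neuron \<Rightarrow> neuron \<Rightarrow> neuron" where
  "comb a b c n1 n2 = (map2 (\<lambda>u v. a * u + b * v) (fst n1) (fst n2), a * snd n1 + b * snd n2 + c)"

lemma sum_list_map2_comb:
  "length w1 = length y \<Longrightarrow> length w2 = length y \<Longrightarrow>
   sum_list (map2 (*) (map2 (\<lambda>u v. a * u + b * v) w1 w2) y) = a * sum_list (map2 (*) w1 y) + b * sum_list (map2 (*) w2 y)"
  for a b :: real and y w1 w2 :: "real list"
proof (induction y arbitrary: w1 w2)
  case Nil then show ?case by simp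
next
  case (Cons z y)
  then obtain u1 r1 u2 r2 where "w1 = u1 # r1" "w2 = u2 # r2"
    by (metis length_Suc_conv)
  with Cons show ?case by (simp add: algebra_simps)
qed

lemma affine_comb:
  "length (fst n1) = length y \<Longrightarrow> length (fst n2) = length y \<Longrightarrow>
   affine (comb a b c n1 n2) y = a * affine n1 y + b * affine n2 y + c"
proof -
  assume h: "length (fst n1) = length y" "length (fst n2) = length y"
  have e: "sum_list (map2 (*) (map2 (\<lambda>u v. a * u + b * v) (fst n1) (fst n2)) y) = a * sum_list (map2 (*) (fst n1) y) + b * sum_list (map2 (*) (fst n2) y)"
    using h by (rule sum_list_map2_comb)
  show ?thesis unfolding affine_def comb_def fst_conv snd_conv e by (simp add: algebra_simps)
qed

lemma length_comb: "length (fst n1) = m \<Longrightarrow> length (fst n2) = m \<Longrightarrow> length (fst (comb a b c n1 n2)) = m"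
  by (simp add: comb_def)

lemma sum_list_map2_append:
  "length w1 = length z1 \<Longrightarrow> sum_list (map2 (*) (w1 @ w2) (z1 @ z2)) = sum_list (map2 (*) w1 z1) + sum_list (map2 (*) w2 z2)"
  for w1 w2 z1 z2 :: "real list"
  by simp

lemma sum_list_map2_zero: "sum_list (map2 (*) (replicate k (0::real)) z) = 0"
proof (induction k arbitrary: z)
  case 0 then show ?case by simp
next
  case (Suc k) then show ?case by (cases z) auto
qed

lemma sum_list_map_upt: "sum_list (map h [0..<n]) = (\<Sum>j<n. h j)" for h :: "nat \<Rightarrow> real"
  by (induction n) auto

lemma sum_list_map2_map: "sum_list (map2 (*) (map f xs) (map g xs)) = sum_list (map (\<lambda>x. f x * g x) xs)"
  for f g :: "'a \<Rightarrow> real"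
  by (induction xs) auto

lemma eval_layer_append: "eval_layer act (L1 @ L2) y = eval_layer act L1 y @ eval_layer act L2 y"
  by (simp add: eval_layer_def)

lemma length_eval_layer[simp]: "length (eval_layer act L y) = length L"
  by (simp add: eval_layer_def)

context
  fixes t :: real and \<alpha> \<beta> :: "nat \<Rightarrow> real" and N :: nat
begin

definition kap :: real where "kap = 2 / deriv (deriv sigmoid) t"

definition mblock :: "neuron \<Rightarrow> neuron \<Rightarrow> layer" where
  "mblock n1 n2 = map (\<lambda>j. comb (\<beta> j) (\<beta> j) t n1 n2) [0..<N] @ map (\<lambda>j. comb (\<beta> j) (- \<beta> j) t n1 n2) [0..<N]"

definition mw :: "real list" where
  "mw = map (\<lambda>j. kap * \<alpha> j / 4) [0..<N] @ map (\<lambda>j. - (kap * \<alpha> j / 4)) [0..<N]"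

definition iblock :: "neuron \<Rightarrow> layer" where
  "iblock n = map (\<lambda>j. comb (real j) 0 0 n n) [0..<N]"

definition iw :: "real list" where
  "iw = map (\<lambda>j. 4 * idc N j) [0..<N]"

fun step :: "neuron list \<Rightarrow> layer \<times> neuron list" where
  "step [] = ([], [])"
| "step [n] = (iblock n, [(iw, 0)])"
| "step (n1 # n2 # r) = (let (L', vs') = step r in
    (mblock n1 n2 @ L', (mw @ replicate (length L') 0, 0) # map (\<lambda>v. (replicate (2*N) 0 @ fst v, snd v)) vs'))"

fun ppf :: "real list \<Rightarrow> real list" where
  "ppf [] = []"
| "ppf [a] = [idf N a]"
| "ppf (a # b # r) = f_mult t \<alpha> \<beta> N a b # ppf r"

lemma iblock_val:
  assumes "length (fst n) = length y"
  shows "affine (iw, 0) (eval_layer sigmoid (iblock n) y) = idf N (affine n y)"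
proof -
  have "eval_layer sigmoid (iblock n) y = map (\<lambda>j. sigmoid (real j * affine n y)) [0..<N]"
    unfolding eval_layer_def iblock_def using assms by (simp add: affine_comb)
  then show ?thesis
    unfolding affine_def iw_def idf_def by (simp add: sum_list_map2_map sum_list_map_upt)
qed

lemma mblock_val:
  assumes "length (fst n1) = length y" "length (fst n2) = length y"
  shows "sum_list (map2 (*) mw (eval_layer sigmoid (mblock n1 n2) y)) = f_mult t \<alpha> \<beta> N (affine n1 y) (affine n2 y)"
proof -
  define u where "u = affine n1 y"
  define v where "v = affine n2 y"
  have e: "eval_layer sigmoid (mblock n1 n2) y =
     map (\<lambda>j. sigmoid (\<beta> j * (u + v) + t)) [0..<N] @ map (\<lambda>j. sigmoid (\<beta> j * (u - v) + t)) [0..<N]"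
    unfolding eval_layer_def mblock_def u_def v_def using assms by (simp add: affine_comb algebra_simps)
  have "sum_list (map2 (*) mw (eval_layer sigmoid (mblock n1 n2) y)) =
     (\<Sum>j<N. kap * \<alpha> j / 4 * sigmoid (\<beta> j * (u + v) + t)) + (\<Sum>j<N. - (kap * \<alpha> j / 4) * sigmoid (\<beta> j * (u - v) + t))"
    unfolding e mw_def by (simp only: sum_list_map2_append length_map sum_list_map2_map sum_list_map_upt)
  also have "\<dots> = f_mult t \<alpha> \<beta> N u v"
    unfolding f_mult_def f_net_sq_def kap_def
    by (simp add: sum_distrib_left sum_negf sum_divide_distrib diff_divide_distrib mult_ac)
  finally show ?thesis unfolding u_def v_def .
qed

lemma step_sem:
  "\<forall>n\<in>set vs. length (fst n) = length y \<Longrightarrow>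
   map (\<lambda>v. affine v (eval_layer sigmoid (fst (step vs)) y)) (snd (step vs)) = ppf (map (\<lambda>n. affine n y) vs)"
proof (induction vs rule: step.induct)
  case 1 then show ?case by simp
next
  case (2 n) then show ?case using iblock_val by simp
next
  case (3 n1 n2 r)
  obtain L' vs' where st: "step r = (L', vs')" by fastforce
  have IH: "map (\<lambda>v. affine v (eval_layer sigmoid L' y)) vs' = ppf (map (\<lambda>n. affine n y) r)"
    using 3 st by simp
  have lm: "length (eval_layer sigmoid (mblock n1 n2) y) = 2 * N" by (simp add: mblock_def)
  have lmw: "length mw = length (eval_layer sigmoid (mblock n1 n2) y)" using lm by (simp add: mw_def)
  have h1: "affine (mw @ replicate (length L') 0, 0) (eval_layer sigmoid (mblock n1 n2 @ L') y)
        = f_mult t \<alpha> \<beta> N (affine n1 y) (affine n2 y)"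
  proof -
    have "affine (mw @ replicate (length L') 0, 0) (eval_layer sigmoid (mblock n1 n2) y @ eval_layer sigmoid L' y)
        = sum_list (map2 (*) mw (eval_layer sigmoid (mblock n1 n2) y))"
      unfolding affine_def using lmw by (simp add: sum_list_map2_zero del: length_eval_layer)
    also have "\<dots> = f_mult t \<alpha> \<beta> N (affine n1 y) (affine n2 y)"
      using mblock_val 3(2) by simp
    finally show ?thesis unfolding eval_layer_append .
  qed
  have h2: "affine (replicate (2*N) 0 @ fst v, snd v) (eval_layer sigmoid (mblock n1 n2 @ L') y)
        = affine v (eval_layer sigmoid L' y)" for v
    unfolding affine_def eval_layer_append using lm
    by (simp add: sum_list_map2_zero del: length_eval_layer)
  show ?case using st IH h1 h2 by (simp add: o_def)
qed

lemma step_len_out: "length (snd (step vs)) = (length vs + 1) div 2"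
  by (induction vs rule: step.induct) (auto split: prod.splits)

lemma step_width: "length (fst (step vs)) \<le> 2 * N * length vs"
  by (induction vs rule: step.induct) (auto split: prod.splits simp: mblock_def iblock_def)

lemma step_wf:
  "\<forall>n\<in>set vs. length (fst n) = m \<Longrightarrow>
   (\<forall>nr\<in>set (fst (step vs)). length (fst nr) = m) \<and> (\<forall>v\<in>set (snd (step vs)). length (fst v) = length (fst (step vs)))"
proof (induction vs rule: step.induct)
  case 1 then show ?case by simp
next
  case (2 n) then show ?case by (auto simp: iblock_def iw_def length_comb)
next
  case (3 n1 n2 r)
  obtain L' vs' where st: "step r = (L', vs')" by fastforce
  with 3 show ?case by (auto simp: mblock_def mw_def length_comb)
qed

fun build :: "nat \<Rightarrow> neuron list \<Rightarrow> layer list \<times> neuron list" where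
  "build 0 vs = ([], vs)"
| "build (Suc k) vs = (let (Ls, vf) = build k (snd (step vs)) in (fst (step vs) # Ls, vf))"

lemma build_sem:
  "\<forall>n\<in>set vs. length (fst n) = length y \<Longrightarrow>
   map (\<lambda>v. affine v (eval_hidden sigmoid (fst (build k vs)) y)) (snd (build k vs)) = (ppf ^^ k) (map (\<lambda>n. affine n y) vs)"
proof (induction k arbitrary: vs y)
  case 0 then show ?case by simp
next
  case (Suc k)
  obtain Ls vf where b: "build k (snd (step vs)) = (Ls, vf)" by fastforce
  have wf: "\<forall>v\<in>set (snd (step vs)). length (fst v) = length (eval_layer sigmoid (fst (step vs)) y)"
    using step_wf[OF Suc.prems] by simp
  have "map (\<lambda>v. affine v (eval_hidden sigmoid (fst (build (Suc k) vs)) y)) (snd (build (Suc k) vs))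
      = map (\<lambda>v. affine v (eval_hidden sigmoid Ls (eval_layer sigmoid (fst (step vs)) y))) vf"
    using b by simp
  also have "\<dots> = (ppf ^^ k) (map (\<lambda>n. affine n (eval_layer sigmoid (fst (step vs)) y)) (snd (step vs)))"
    using Suc.IH[OF wf] b by simp
  also have "\<dots> = (ppf ^^ k) (ppf (map (\<lambda>n. affine n y) vs))"
    using step_sem[OF Suc.prems] by simp
  finally show ?case by (simp add: funpow_swap1)
qed

lemma build_struct:
  "\<forall>n\<in>set vs. length (fst n) = m \<Longrightarrow>
   length (fst (build k vs)) = k \<and>
   (\<forall>L\<in>set (fst (build k vs)). length L \<le> 2 * N * length vs) \<and>
   (\<exists>m'. layers_wf m (fst (build k vs)) m' \<and> (\<forall>v\<in>set (snd (build k vs)). length (fst v) = m'))"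
proof (induction k arbitrary: vs m)
  case 0 then show ?case by auto
next
  case (Suc k)
  obtain Ls vf where b: "build k (snd (step vs)) = (Ls, vf)" by fastforce
  have wf: "\<forall>v\<in>set (snd (step vs)). length (fst v) = length (fst (step vs))"
    and wf1: "\<forall>nr\<in>set (fst (step vs)). length (fst nr) = m"
    using step_wf[OF Suc.prems] by auto
  have IH: "length Ls = k \<and> (\<forall>L\<in>set Ls. length L \<le> 2 * N * length (snd (step vs))) \<and>
     (\<exists>m'. layers_wf (length (fst (step vs))) Ls m' \<and> (\<forall>v\<in>set vf. length (fst v) = m'))"
    using Suc.IH[OF wf] b by simp
  have "length (snd (step vs)) \<le> length vs" unfolding step_len_out by simp
  then have "2 * N * length (snd (step vs)) \<le> 2 * N * length vs" by simp
  then have w: "\<forall>L\<in>set Ls. length L \<le> 2 * N * length vs" using IH by (meson order_trans)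
  then show ?case using IH b wf1 step_width[of vs] by auto
qed

lemma build_len_out:
  "length vs \<ge> 1 \<Longrightarrow> length vs \<le> 2 ^ k \<Longrightarrow> length (snd (build k vs)) = 1"
proof (induction k arbitrary: vs)
  case 0 then show ?case by simp
next
  case (Suc k)
  obtain Ls vf where b: "build k (snd (step vs)) = (Ls, vf)" by fastforce
  have "length (snd (step vs)) \<ge> 1" "length (snd (step vs)) \<le> 2 ^ k"
    using Suc.prems unfolding step_len_out by auto
  then have "length (snd (build k (snd (step vs)))) = 1" by (rule Suc.IH)
  then show ?case using b by simp
qed

end

fun pp :: "real list \<Rightarrow> real list" where
  "pp [] = []"
| "pp [a] = [a]"
| "pp (a # b # r) = a * b # pp r"

lemma prod_list_pp: "prod_list (pp l) = prod_list l"
  by (induction l rule: pp.induct) auto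

lemma prod_list_pp_iter: "prod_list ((pp ^^ k) l) = prod_list l"
  by (induction k) (auto simp: prod_list_pp)

definition Gf :: "real \<Rightarrow> nat \<Rightarrow> real \<Rightarrow> real" where
  "Gf a N C = a * (1 + C) ^ N + (2 + C) * C"

lemma Gf_nonneg: "a \<ge> 0 \<Longrightarrow> C \<ge> 0 \<Longrightarrow> Gf a N C \<ge> 0"
  unfolding Gf_def by simp

lemma Gf_iter_nonneg: "a \<ge> 0 \<Longrightarrow> C \<ge> 0 \<Longrightarrow> (Gf a N ^^ k) C \<ge> 0"
  by (induction k) (auto simp: Gf_nonneg)

lemma pow_le_self: "0 < A \<Longrightarrow> A \<le> 1 \<Longrightarrow> N \<ge> 1 \<Longrightarrow> A ^ N \<le> (A::real)"
  by (metis One_nat_def less_eq_real_def power_decreasing power_one_right)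

lemma abs_bound_v:
  fixes v p A C :: real
  assumes "\<bar>v - p\<bar> \<le> C * A ^ N" "\<bar>p\<bar> \<le> A" "0 < A" "A \<le> 1" "N \<ge> 1" "C \<ge> 0"
  shows "\<bar>v\<bar> \<le> (1 + C) * A"
proof -
  have "C * A ^ N \<le> C * A" using pow_le_self[OF assms(3,4,5)] assms(6) by (rule mult_left_mono)
  moreover have "\<bar>v\<bar> \<le> \<bar>v - p\<bar> + \<bar>p\<bar>" using abs_triangle_ineq[of "v - p" p] by simp
  moreover have "(1 + C) * A = A + C * A" by (simp add: algebra_simps)
  ultimately show ?thesis using assms(1,2) by linarith
qed

lemma prod_err:
  fixes v1 v2 p1 p2 A C e :: real
  assumes "\<bar>v1 - p1\<bar> \<le> e" "\<bar>v2 - p2\<bar> \<le> e" "\<bar>v1\<bar> \<le> (1 + C) * A" "\<bar>p2\<bar> \<le> A" "e \<ge> 0" "C \<ge> 0" "A \<le> 1" "A > 0"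
  shows "\<bar>v1 * v2 - p1 * p2\<bar> \<le> (2 + C) * e"
proof -
  have "v1 * v2 - p1 * p2 = v1 * (v2 - p2) + p2 * (v1 - p1)" by (simp add: algebra_simps)
  then have "\<bar>v1 * v2 - p1 * p2\<bar> \<le> \<bar>v1\<bar> * \<bar>v2 - p2\<bar> + \<bar>p2\<bar> * \<bar>v1 - p1\<bar>"
    by (metis abs_mult abs_triangle_ineq)
  also have "\<dots> \<le> ((1 + C) * A) * e + A * e"
    using assms by (intro add_mono mult_mono) auto
  also have "\<dots> \<le> (1 + C) * e + e"
  proof -
    have ae: "A * e \<le> e" using assms by (intro mult_left_le_one_le) auto
    moreover have "(1 + C) * A * e \<le> (1 + C) * e"
      unfolding mult.assoc using ae assms by (intro mult_left_mono) auto
    ultimately show ?thesis by linarith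
  qed
  finally show ?thesis by (simp add: algebra_simps)
qed

lemma ppf_err:
  assumes N1: "N \<ge> 1" and A: "0 < A" "A \<le> 1" and C: "C \<ge> 0"
    and Kid: "Kid \<ge> 0" "\<And>u. \<bar>idf N u - u\<bar> \<le> Kid * \<bar>u\<bar> ^ N"
    and c56: "c56 \<ge> 0" "\<And>A x y. A > 0 \<Longrightarrow> x \<in> {-A..A} \<Longrightarrow> y \<in> {-A..A} \<Longrightarrow>
            \<bar>f_mult t \<alpha> \<beta> N x y - x * y\<bar> \<le> c56 * A ^ N"
    and h: "list_all2 (\<lambda>v p. \<bar>v - p\<bar> \<le> C * A ^ N \<and> \<bar>p\<bar> \<le> A) vs ps"
  shows "list_all2 (\<lambda>v p. \<bar>v - p\<bar> \<le> Gf (c56 + Kid) N C * A ^ N \<and> \<bar>p\<bar> \<le> A) (ppf t \<alpha> \<beta> N vs) (pp ps)"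
  using h
proof (induction ps arbitrary: vs rule: pp.induct)
  case 1 then show ?case by simp
next
  case (2 p)
  then obtain v where v: "vs = [v]" "\<bar>v - p\<bar> \<le> C * A ^ N" "\<bar>p\<bar> \<le> A"
    by (auto simp: list_all2_Cons2)
  have vb: "\<bar>v\<bar> \<le> (1 + C) * A" using abs_bound_v[OF v(2,3) A N1 C] .
  have "\<bar>v\<bar> ^ N \<le> ((1 + C) * A) ^ N" using vb by (intro power_mono) auto
  then have "Kid * \<bar>v\<bar> ^ N \<le> Kid * ((1 + C) ^ N * A ^ N)" using Kid(1)
    by (metis mult_left_mono power_mult_distrib)
  then have "\<bar>idf N v - p\<bar> \<le> Kid * (1 + C) ^ N * A ^ N + C * A ^ N"
    using Kid(2)[of v] v(2) by (simp add: algebra_simps)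
  also have "\<dots> \<le> Gf (c56 + Kid) N C * A ^ N"
  proof -
    have "0 \<le> c56 * (1 + C) ^ N * A ^ N" using c56(1) C A by simp
    moreover have "C * A ^ N \<le> (2 + C) * C * A ^ N" using C A
      by (intro mult_right_mono) (auto simp: algebra_simps)
    ultimately show ?thesis unfolding Gf_def by (simp add: algebra_simps)
  qed
  finally show ?case using v by simp
next
  case (3 p1 p2 r)
  then obtain v1 v2 vr where v: "vs = v1 # v2 # vr" "\<bar>v1 - p1\<bar> \<le> C * A ^ N" "\<bar>p1\<bar> \<le> A"
     "\<bar>v2 - p2\<bar> \<le> C * A ^ N" "\<bar>p2\<bar> \<le> A"
     "list_all2 (\<lambda>v p. \<bar>v - p\<bar> \<le> C * A ^ N \<and> \<bar>p\<bar> \<le> A) vr r"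
    by (auto simp: list_all2_Cons2)
  have IH: "list_all2 (\<lambda>v p. \<bar>v - p\<bar> \<le> Gf (c56 + Kid) N C * A ^ N \<and> \<bar>p\<bar> \<le> A) (ppf t \<alpha> \<beta> N vr) (pp r)"
    using 3(1) v(6) .
  have vb1: "\<bar>v1\<bar> \<le> (1 + C) * A" using abs_bound_v[OF v(2,3) A N1 C] .
  have vb2: "\<bar>v2\<bar> \<le> (1 + C) * A" using abs_bound_v[OF v(4,5) A N1 C] .
  have pos: "(1 + C) * A > 0" using A C by simp
  have m: "\<bar>f_mult t \<alpha> \<beta> N v1 v2 - v1 * v2\<bar> \<le> c56 * ((1 + C) * A) ^ N"
    using c56(2)[OF pos] vb1 vb2 by (simp add: abs_le_iff)
  have pe: "\<bar>v1 * v2 - p1 * p2\<bar> \<le> (2 + C) * (C * A ^ N)"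
    using prod_err[OF v(2) v(4) vb1 v(5) _ C A(2) A(1)] C A by simp
  have "\<bar>f_mult t \<alpha> \<beta> N v1 v2 - p1 * p2\<bar> \<le> c56 * ((1 + C) * A) ^ N + (2 + C) * (C * A ^ N)"
    using m pe by linarith
  also have "\<dots> \<le> Gf (c56 + Kid) N C * A ^ N"
  proof -
    have "0 \<le> Kid * (1 + C) ^ N * A ^ N" using Kid(1) C A by simp
    moreover have "c56 * ((1 + C) * A) ^ N = c56 * (1 + C) ^ N * A ^ N"
      by (simp only: power_mult_distrib mult.assoc)
    moreover have "Gf (c56 + Kid) N C * A ^ N = c56 * (1 + C) ^ N * A ^ N + Kid * (1 + C) ^ N * A ^ N + (2 + C) * (C * A ^ N)"
      unfolding Gf_def by (simp add: algebra_simps)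
    ultimately show ?thesis by linarith
  qed
  finally have e: "\<bar>f_mult t \<alpha> \<beta> N v1 v2 - p1 * p2\<bar> \<le> Gf (c56 + Kid) N C * A ^ N" .
  have "\<bar>p1 * p2\<bar> \<le> A"
  proof -
    have "\<bar>p1 * p2\<bar> \<le> A * A" unfolding abs_mult using v(3,5) by (intro mult_mono) auto
    also have "\<dots> \<le> A" using A by (simp add: mult_left_le)
    finally show ?thesis .
  qed
  then show ?case using v(1) e IH by simp
qed

lemma ppf_err_iter:
  assumes N1: "N \<ge> 1" and A: "0 < A" "A \<le> 1" and C: "C \<ge> 0"
    and Kid: "Kid \<ge> 0" "\<And>u. \<bar>idf N u - u\<bar> \<le> Kid * \<bar>u\<bar> ^ N"
    and c56: "c56 \<ge> 0" "\<And>A x y. A > 0 \<Longrightarrow> x \<in> {-A..A} \<Longrightarrow> y \<in> {-A..A} \<Longrightarrow>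
            \<bar>f_mult t \<alpha> \<beta> N x y - x * y\<bar> \<le> c56 * A ^ N"
    and h: "list_all2 (\<lambda>v p. \<bar>v - p\<bar> \<le> C * A ^ N \<and> \<bar>p\<bar> \<le> A) vs ps"
  shows "list_all2 (\<lambda>v p. \<bar>v - p\<bar> \<le> (Gf (c56 + Kid) N ^^ k) C * A ^ N \<and> \<bar>p\<bar> \<le> A)
           ((ppf t \<alpha> \<beta> N ^^ k) vs) ((pp ^^ k) ps)"
proof (induction k)
  case 0 then show ?case using h by simp
next
  case (Suc k)
  have "(Gf (c56 + Kid) N ^^ k) C \<ge> 0" using Gf_iter_nonneg c56(1) Kid(1) C by simp
  from ppf_err[OF N1 A this Kid c56 Suc.IH] show ?case by simp
qed

lemma ex_bound_list: "\<exists>B\<ge>0. \<forall>w\<in>set ws. \<bar>w\<bar> \<le> (B::real)"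
proof (induction ws)
  case Nil then show ?case by auto
next
  case (Cons a ws)
  then obtain B where "B \<ge> 0" "\<forall>w\<in>set ws. \<bar>w\<bar> \<le> B" by blast
  then show ?case by (intro exI[of _ "max B \<bar>a\<bar>"]) auto
qed

lemma neuron_bounded_mono: "neuron_bounded B nr \<Longrightarrow> B \<le> B' \<Longrightarrow> neuron_bounded B' nr"
  unfolding neuron_bounded_def by auto

lemma ex_bound_neuron: "\<exists>B\<ge>0. neuron_bounded B nr"
proof -
  obtain B where "B \<ge> 0" "\<forall>w\<in>set (fst nr). \<bar>w\<bar> \<le> B" using ex_bound_list by blast
  then show ?thesis unfolding neuron_bounded_def by (intro exI[of _ "max B \<bar>snd nr\<bar>"]) auto
qed

lemma ex_bound_layer: "\<exists>B\<ge>0. \<forall>nr\<in>set L. neuron_bounded B nr"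
proof (induction L)
  case Nil then show ?case by auto
next
  case (Cons a L)
  then obtain B where B: "B \<ge> 0" "\<forall>nr\<in>set L. neuron_bounded B nr" by blast
  obtain B' where B': "B' \<ge> 0" "neuron_bounded B' a" using ex_bound_neuron by blast
  show ?case
    using B B' by (intro exI[of _ "max B B'"]) (auto intro: neuron_bounded_mono)
qed

lemma ex_bound_layers: "\<exists>B\<ge>0. \<forall>L\<in>set Ls. \<forall>nr\<in>set L. neuron_bounded B nr"
proof (induction Ls)
  case Nil then show ?case by auto
next
  case (Cons a Ls)
  then obtain B where B: "B \<ge> 0" "\<forall>L\<in>set Ls. \<forall>nr\<in>set L. neuron_bounded B nr" by blast
  obtain B' where B': "B' \<ge> 0" "\<forall>nr\<in>set a. neuron_bounded B' nr" using ex_bound_layer by blast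
  have "\<forall>L\<in>set (a # Ls). \<forall>nr\<in>set L. neuron_bounded (max B B') nr"
  proof (intro ballI)
    fix L nr assume "L \<in> set (a # Ls)" "nr \<in> set L"
    then have "neuron_bounded B nr \<or> neuron_bounded B' nr" using B B' by auto
    then show "neuron_bounded (max B B') nr" using neuron_bounded_mono by (metis max.cobounded1 max.cobounded2)
  qed
  then show ?case using B B' by (intro exI[of _ "max B B'"]) auto
qed

lemma ex_weights_bounded: "\<exists>B\<ge>0. weights_bounded B F"
proof -
  obtain B where B: "B \<ge> 0" "\<forall>L\<in>set (fst F). \<forall>nr\<in>set L. neuron_bounded B nr" using ex_bound_layers by blast
  obtain B' where B': "B' \<ge> 0" "neuron_bounded B' (snd F)" using ex_bound_neuron by blast
  have "\<forall>L\<in>set (fst F). \<forall>nr\<in>set L. neuron_bounded (max B B') nr"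
    using B(2) neuron_bounded_mono by (metis max.cobounded1)
  moreover have "neuron_bounded (max B B') (snd F)"
    using B'(2) neuron_bounded_mono by (metis max.cobounded2)
  ultimately show ?thesis unfolding weights_bounded_def
    using B B' by (intro exI[of _ "max B B'"]) auto
qed

lemma prod_list_map_upt: "prod_list (map x [0..<d]) = (\<Prod>j<d. x j)" for x :: "nat \<Rightarrow> real"
  by (induction d) auto

lemma unit_affine:
  assumes "j < d"
  shows "affine (map (\<lambda>i. if i = j then 1 else 0) [0..<d], 0) (map x [0..<d]) = x j"
proof -
  have "affine (map (\<lambda>i. if i = j then 1 else 0) [0..<d], 0) (map x [0..<d]) = (\<Sum>i<d. (if i = j then 1 else 0) * x i)"
    unfolding affine_def by (simp add: sum_list_map2_map sum_list_map_upt)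
  also have "\<dots> = (\<Sum>i<d. if i = j then x i else 0)" by (intro sum.cong) auto
  also have "\<dots> = x j" using assms by simp
  finally show ?thesis .
qed

lemma d_le_pow: assumes "d \<ge> 1" shows "d \<le> 2 ^ nat \<lceil>log 2 (real d)\<rceil>"
proof -
  have "real d = 2 powr (log 2 (real d))" using assms by simp
  also have "\<dots> \<le> 2 powr (real (nat \<lceil>log 2 (real d)\<rceil>))"
    by (intro powr_mono) (auto, linarith)
  also have "\<dots> = 2 ^ nat \<lceil>log 2 (real d)\<rceil>" by (simp add: powr_realpow)
  finally show ?thesis by (metis of_nat_le_iff of_nat_numeral of_nat_power)
qed

theorem lemma11:
  fixes N d :: nat and t c54 c56 :: real and \<alpha> \<beta> :: "nat \<Rightarrow> real"
  assumes "N > 2" and "d \<ge> 1"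
    and "deriv (deriv sigmoid) t \<noteq> 0"
    and "c54 \<ge> 0"
    and "\<And>A x. A > 0 \<Longrightarrow> x \<in> {-A..A} \<Longrightarrow> \<bar>f_net_sq t \<alpha> \<beta> N x - x\<^sup>2\<bar> \<le> c54 * A ^ N"
    and "c56 > 0"
    and "\<And>A x y. A > 0 \<Longrightarrow> x \<in> {-A..A} \<Longrightarrow> y \<in> {-A..A} \<Longrightarrow>
            \<bar>f_mult t \<alpha> \<beta> N x y - x * y\<bar> \<le> c56 * A ^ N"
  shows "\<exists>c57 B. c57 \<ge> 0 \<and> B \<ge> 0 \<and>
           (\<forall>A. 0 < A \<and> A \<le> 1 \<and> c56 * 4 ^ (d * N) * A ^ (N - 1) \<le> 1 \<longrightarrow>
              (\<exists>F :: ffnet. net_wf d F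
                 \<and> length (fst F) \<le> nat \<lceil>log 2 (real d)\<rceil>
                 \<and> (\<forall>L\<in>set (fst F). length L \<le> 2 * N * d)
                 \<and> weights_bounded B F
                 \<and> (\<forall>x :: nat \<Rightarrow> real. (\<forall>j<d. x j \<in> {-A..A}) \<longrightarrow>
                      \<bar>net_eval sigmoid F (map x [0..<d]) - (\<Prod>j<d. x j)\<bar> \<le> c57 * A ^ N)))"
proof -
  have N2: "N \<ge> 2" and N1: "N \<ge> 1" using assms(1) by auto
  obtain Kid where Kid: "Kid \<ge> 0" "\<And>u. \<bar>idf N u - u\<bar> \<le> Kid * \<bar>u\<bar> ^ N"
    using id_approx[OF N2] by blast
  have c56': "c56 \<ge> 0" using assms(6) by simp
  define L where "L = nat \<lceil>log 2 (real d)\<rceil>"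
  define vs0 :: "neuron list" where
    "vs0 = map (\<lambda>j. (map (\<lambda>i. if i = j then 1 else 0) [0..<d], 0::real)) [0..<d]"
  define bd where "bd = build t \<alpha> \<beta> N L vs0"
  define F :: ffnet where "F = (fst bd, hd (snd bd))"
  have len0: "\<forall>n\<in>set vs0. length (fst n) = d" by (auto simp: vs0_def)
  have lv0: "length vs0 = d" by (simp add: vs0_def)
  have st: "length (fst bd) = L \<and> (\<forall>La\<in>set (fst bd). length La \<le> 2 * N * length vs0) \<and>
     (\<exists>m'. layers_wf d (fst bd) m' \<and> (\<forall>v\<in>set (snd bd). length (fst v) = m'))"
    unfolding bd_def by (rule build_struct[OF len0])
  then obtain m' where s1: "length (fst bd) = L" and s2: "\<forall>La\<in>set (fst bd). length La \<le> 2 * N * d"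
    and s3: "layers_wf d (fst bd) m'" and s4: "\<forall>v\<in>set (snd bd). length (fst v) = m'"
    using lv0 by auto
  have "length (snd bd) = 1"
    unfolding bd_def using lv0 assms(2) d_le_pow[OF assms(2)] unfolding L_def
    by (intro build_len_out) auto
  then obtain v where hv: "snd bd = [v]" by (metis One_nat_def length_0_conv length_Suc_conv)
  have wf: "net_wf d F" unfolding net_wf_def F_def using s3 s4 hv by auto
  have lenF: "length (fst F) \<le> nat \<lceil>log 2 (real d)\<rceil>" using s1 unfolding F_def L_def by simp
  have width: "\<forall>La\<in>set (fst F). length La \<le> 2 * N * d" using s2 unfolding F_def by simp
  obtain B where B: "B \<ge> 0" "weights_bounded B F" using ex_weights_bounded by blast
  define c57 where "c57 = (Gf (c56 + Kid) N ^^ L) 0"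
  have c57: "c57 \<ge> 0" unfolding c57_def using Gf_iter_nonneg c56' Kid(1) by simp
  show ?thesis
  proof (rule exI[of _ c57], rule exI[of _ B], intro conjI allI impI c57 B(1))
    fix A :: real assume hA: "0 < A \<and> A \<le> 1 \<and> c56 * 4 ^ (d * N) * A ^ (N - 1) \<le> 1"
    then have A0: "0 < A" and A1: "A \<le> 1" by auto
    show "\<exists>F :: ffnet. net_wf d F
                 \<and> length (fst F) \<le> nat \<lceil>log 2 (real d)\<rceil>
                 \<and> (\<forall>L\<in>set (fst F). length L \<le> 2 * N * d)
                 \<and> weights_bounded B F
                 \<and> (\<forall>x :: nat \<Rightarrow> real. (\<forall>j<d. x j \<in> {-A..A}) \<longrightarrow>
                      \<bar>net_eval sigmoid F (map x [0..<d]) - (\<Prod>j<d. x j)\<bar> \<le> c57 * A ^ N)"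
    proof (intro exI[of _ F] conjI wf lenF width B(2) allI impI)
      fix x :: "nat \<Rightarrow> real" assume hx: "\<forall>j<d. x j \<in> {-A..A}"
      define y where "y = map x [0..<d]"
      have my: "map (\<lambda>n. affine n y) vs0 = y"
        unfolding vs0_def y_def map_map o_def by (rule map_cong[OF refl]) (simp add: unit_affine)
      have len_y: "\<forall>n\<in>set vs0. length (fst n) = length y" using len0 unfolding y_def by simp
      have sem: "map (\<lambda>v. affine v (eval_hidden sigmoid (fst bd) y)) (snd bd) = (ppf t \<alpha> \<beta> N ^^ L) y"
        unfolding bd_def using build_sem[OF len_y] my by simp
      then have sem1: "(ppf t \<alpha> \<beta> N ^^ L) y = [net_eval sigmoid F y]"
        using hv unfolding F_def net_eval_def by simp
      have h0: "list_all2 (\<lambda>v p. \<bar>v - p\<bar> \<le> 0 * A ^ N \<and> \<bar>p\<bar> \<le> A) y y"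
        unfolding list_all2_same y_def using hx by auto
      have "list_all2 (\<lambda>v p. \<bar>v - p\<bar> \<le> (Gf (c56 + Kid) N ^^ L) 0 * A ^ N \<and> \<bar>p\<bar> \<le> A)
           ((ppf t \<alpha> \<beta> N ^^ L) y) ((pp ^^ L) y)"
        by (rule ppf_err_iter[OF N1 A0 A1 order_refl Kid c56' assms(7) h0])
      then obtain b where b: "(pp ^^ L) y = [b]" "\<bar>net_eval sigmoid F y - b\<bar> \<le> c57 * A ^ N"
        unfolding sem1 c57_def by (auto simp: list_all2_Cons1)
      have "b = prod_list y" using prod_list_pp_iter[of L y] b(1) by simp
      also have "\<dots> = (\<Prod>j<d. x j)" unfolding y_def by (rule prod_list_map_upt)
      finally show "\<bar>net_eval sigmoid F (map x [0..<d]) - (\<Prod>j<d. x j)\<bar> \<le> c57 * A ^ N"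
        using b(2) unfolding y_def by simp
    qed
  qed
qed

end
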